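(* Assume the setting below. Then for all $s\in\mathbb{R}$ and $\Delta t\ge0$, $$R^*_{M_i}(s+\Delta t)-R^*_{M_i}(s)\le \Big[\Delta t-\frac{\beta_{ST}(\Delta t)}{C}\Big]_\uparrow^+\cdot idSl_{M_i}+c_{M_i}^{max}-c_{M_i}^{min},$$ i.e. $\sigma_{M_i}(t)=[t-\beta_{ST}(t)/C]_\uparrow^+\,idSl_{M_i}+c_{M_i}^{max}-c_{M_i}^{min}$ is a shaping curve for the output of class $M_i$ at the port (non-preemption mode).
   Context: Fix an output port with physical link rate $C>0$. Its gate control list (GCL) is periodic with period $p>0$ and contains $N\ge 1$ scheduled-traffic (ST) windows per period. Window $k\in\{0,\dots,N-1\}$ is the interval $[o_k,o_k+L_k)$, where $0\le o_0<o_1<\dots<o_{N-1}<p$, $L_k\ge 0$, $o_k+L_k\le o_{k+1}$ for $k<N-1$ and $o_{N-1}+L_{N-1}\le o_0+p$. Indices are extended to all integers periodically: $o_{k+N}=o_k+p$, $L_{k+N}=L_k$. Relative offsets are $o_{j,i}=o_j-o_i$. Let $S=\bigcup_{k\in\mathbb Z}[o_k,o_k+L_k)$ and for $s\le t$ let $\Delta t_{ST}(s,t)$ be the Lebesgue measure of $S\cap[s,t]$. Let $g_i=o_i-(o_{i-1}+L_{i-1})$ be the idle gap before window $i$. Define $\beta_{TDMA}(x,L)=C\max\{\lfloor x/p\rfloor L,\ x-\lceil x/p\rceil(p-L)\}$ and $\beta_{ST}(t)=\min_{0\le i\le N-1}\sum_{j=i}^{i+N-1}\beta_{TDMA}\big(t+p-L_j-g_i-o_{j,i},\,L_j\big)$.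 For a function $f$, $[f]_\uparrow^+(t)=\max\{0,\sup_{0\le u\le t}f(u)\}$. AVB class $M_i$ has idle slope $idSl_{M_i}\in(0,C)$ and send slope $sdSl_{M_i}=idSl_{M_i}-C$; $R^*_{M_i}(t)$ is the cumulative number of bits of class $M_i$ transmitted by time $t$ and $c_{M_i}(t)$ its credit. Assumptions: for every interval $[s,s+\Delta t]$, the interval is partitioned into measurable sets $T^+$ (where $c_{M_i}$ increases at rate $idSl_{M_i}$), $T^-$ (exactly the times when a class-$M_i$ frame is being transmitted, where $R^*_{M_i}$ increases at rate $C$ and $c_{M_i}$ changes at rate $sdSl_{M_i}$), and $T^0$ (where $c_{M_i}$ does not increase: it is frozen or reset downward); $R^*_{M_i}$ is constant outside $T^-$; $S\cap[s,s+\Delta t]\subseteq T^0$ (AVB gates closed in ST windows). Constants $c_{M_i}^{min}\le c_{M_i}^{max}$ satisfy $c_{M_i}^{min}\le c_{M_i}(t)\le c_{M_i}^{max}$ for all $t$. *)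

theory Defs
  imports "HOL-Analysis.Analysis"
begin

text \<open>GCL data: off, L :: int => real are the (periodically extended) window
offsets and lengths; N windows per period p; link rate C.\<close>

definition ST_set :: "(int \<Rightarrow> real) \<Rightarrow> (int \<Rightarrow> real) \<Rightarrow> real set" where
  "ST_set off L = (\<Union>k::int. {off k ..< off k + L k})"

definition gap :: "(int \<Rightarrow> real) \<Rightarrow> (int \<Rightarrow> real) \<Rightarrow> int \<Rightarrow> real" where
  "gap off L i = off i - (off (i - 1) + L (i - 1))"

definition beta_TDMA :: "real \<Rightarrow> real \<Rightarrow> real \<Rightarrow> real \<Rightarrow> real" where
  "beta_TDMA C p x Lw =
     C * max (of_int \<lfloor>x / p\<rfloor> * Lw) (x - of_int \<lceil>x / p\<rceil> * (p - Lw))"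

definition beta_ST :: "real \<Rightarrow> real \<Rightarrow> nat \<Rightarrow> (int \<Rightarrow> real) \<Rightarrow> (int \<Rightarrow> real) \<Rightarrow> real \<Rightarrow> real" where
  "beta_ST C p N off L t =
     Min ((\<lambda>i::int. \<Sum>j = i..i + int N - 1.
             beta_TDMA C p (t + p - L j - gap off L i - (off j - off i)) (L j)) ` {0..int N - 1})"

definition up_plus :: "(real \<Rightarrow> real) \<Rightarrow> real \<Rightarrow> real" where
  "up_plus f t = max 0 (SUP u\<in>{0..t}. f u)"

end

theory Submission
  imports Defs "HOL-Analysis.Analysis"
begin


lemma measure_Ico_max: "measure lebesgue {l..<u::real} = max 0 (u - l)"
  by (cases "l \<le> u") auto

lemma Ico_lmeasurable: "{l..<u::real} \<in> lmeasurable"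
  by (rule fmeasurableI2[of "{l..u}"]) auto

locale gcl =
  fixes p :: real and N :: nat and off L :: "int \<Rightarrow> real"
  assumes p_pos: "p > 0" and N_pos: "N \<ge> 1"
    and o0: "0 \<le> off 0"
    and o_mono: "\<And>k. 0 \<le> k \<Longrightarrow> k < int N - 1 \<Longrightarrow> off k < off (k + 1)"
    and o_last: "off (int N - 1) < p"
    and L_nonneg: "\<And>k. 0 \<le> k \<Longrightarrow> k \<le> int N - 1 \<Longrightarrow> L k \<ge> 0"
    and no_overlap: "\<And>k. 0 \<le> k \<Longrightarrow> k < int N - 1 \<Longrightarrow> off k + L k \<le> off (k + 1)"
    and no_overlap_last: "off (int N - 1) + L (int N - 1) \<le> off 0 + p"
    and o_per: "\<And>k. off (k + int N) = off k + p"
    and L_per: "\<And>k. L (k + int N) = L k"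
begin

definition e :: "int \<Rightarrow> real" where "e k = off k + L k"

lemma off_shift_nat: "off (k + int n * int N) = off k + real n * p"
proof (induction n)
  case 0 then show ?case by simp
next
  case (Suc n)
  have "off (k + int (Suc n) * int N) = off ((k + int n * int N) + int N)"
    by (simp add: algebra_simps)
  also have "\<dots> = off (k + int n * int N) + p" by (rule o_per)
  also have "\<dots> = off k + real (Suc n) * p" using Suc by (simp add: algebra_simps)
  finally show ?case .
qed

lemma L_shift_nat: "L (k + int n * int N) = L k"
proof (induction n)
  case 0 then show ?case by simp
next
  case (Suc n)
  have "L (k + int (Suc n) * int N) = L ((k + int n * int N) + int N)"
    by (simp add: algebra_simps)
  also have "\<dots> = L k" using L_per Suc by simp
  finally show ?case .
qed

lemma off_shift: "off (k + q * int N) = off k + of_int q * p"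
proof (cases "q \<ge> 0")
  case True
  then obtain n where "q = int n" by (intro that[of "nat q"]) simp
  then show ?thesis using off_shift_nat by simp
next
  case False
  then obtain n where q: "q = - int n" by (intro that[of "nat (-q)"]) simp
  have "off k = off ((k + q * int N) + int n * int N)" using q by simp
  also have "\<dots> = off (k + q * int N) + real n * p" by (rule off_shift_nat)
  finally show ?thesis using q by simp
qed

lemma L_shift: "L (k + q * int N) = L k"
proof (cases "q \<ge> 0")
  case True
  then obtain n where "q = int n" by (intro that[of "nat q"]) simp
  then show ?thesis using L_shift_nat by simp
next
  case False
  then obtain n where q: "q = - int n" by (intro that[of "nat (-q)"]) simp
  have "L k = L ((k + q * int N) + int n * int N)" using q by simp
  also have "\<dots> = L (k + q * int N)" by (rule L_shift_nat)
  finally show ?thesis by simp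
qed

lemma e_shift: "e (k + q * int N) = e k + of_int q * p"
  unfolding e_def using off_shift L_shift by simp

lemma step_all: "L k \<ge> 0 \<and> off k < off (k + 1) \<and> off k + L k \<le> off (k + 1)"
proof -
  define r where "r = k mod int N"
  define q where "q = k div int N"
  have k: "k = r + q * int N" unfolding r_def q_def by simp
  have r0: "0 \<le> r" "r \<le> int N - 1" unfolding r_def using N_pos by auto
  have "L r \<ge> 0 \<and> off r < off (r + 1) \<and> off r + L r \<le> off (r + 1)"
  proof (cases "r < int N - 1")
    case True then show ?thesis using r0 L_nonneg o_mono no_overlap by auto
  next
    case False
    then have rr: "r = int N - 1" using r0 by simp
    have "off (r + 1) = off 0 + p" using o_per[of 0] rr by simp
    then show ?thesis using rr L_nonneg[of r] r0 o_last o0 no_overlap_last by auto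
  qed
  moreover have "off (k + 1) = off (r + 1) + of_int q * p"
    using off_shift[of "r+1" q] k by (simp add: algebra_simps)
  ultimately show ?thesis using k off_shift[of r q] L_shift[of r q] by auto
qed

lemma L_nn: "L k \<ge> 0" using step_all by blast

lemma off_mono_nat: "off k \<le> off (k + int n)"
proof (induction n)
  case 0 then show ?case by simp
next
  case (Suc n) then show ?case using step_all[of "k + int n"] by (simp add: algebra_simps)
qed

lemma off_mono: "k \<le> k' \<Longrightarrow> off k \<le> off k'"
  using off_mono_nat[of k "nat (k' - k)"] by simp

lemma e_le_off: "k < k' \<Longrightarrow> e k \<le> off k'"
  using step_all[of k] off_mono[of "k+1" k'] unfolding e_def by simp

lemma e_mono: "k \<le> k' \<Longrightarrow> e k \<le> e k'"
  using e_le_off[of k k'] L_nn[of k'] unfolding e_def by (cases "k = k'") auto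

lemma L_le_p: "L k \<le> p"
  using e_le_off[of k "k + int N"] o_per[of k] N_pos unfolding e_def by simp

lemma window_in_ST: "y \<in> {off k..<e k} \<Longrightarrow> y \<in> ST_set off L"
  unfolding ST_set_def e_def by auto

lemma windows_disj: "k \<noteq> k' \<Longrightarrow> {off k..<e k} \<inter> {off k'..<e k'} = {}"
proof (cases "k < k'")
  case True then show ?thesis using e_le_off[of k k'] by auto
next
  case False
  assume "k \<noteq> k'"
  then have "k' < k" using False by simp
  then show ?thesis using e_le_off[of k' k] by auto
qed

lemma idx_inj:
  assumes "i \<le> j" "j \<le> i + int N - 1" "i \<le> j'" "j' \<le> i + int N - 1"
    and "j + int n * int N = j' + int n' * int N"
  shows "j = j' \<and> n = n'"
proof -
  have c: "j - j' = (int n' - int n) * int N" using assms(5) by (simp add: algebra_simps)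
  have "\<not> n < n'"
  proof
    assume "n < n'"
    then have "(int n' - int n) * int N \<ge> 1 * int N" by (intro mult_right_mono) auto
    then show False using c assms by linarith
  qed
  moreover have "\<not> n' < n"
  proof
    assume "n' < n"
    then have "(int n - int n') * int N \<ge> 1 * int N" by (intro mult_right_mono) auto
    moreover have "(int n - int n') * int N = - ((int n' - int n) * int N)" by (simp add: algebra_simps)
    ultimately show False using c assms by linarith
  qed
  ultimately have "n = n'" by simp
  then show ?thesis using c by simp
qed

definition G :: "real \<Rightarrow> real \<Rightarrow> real" where
  "G x Lw = of_int \<lfloor>x / p\<rfloor> * Lw + max 0 (x - of_int \<lfloor>x / p\<rfloor> * p - (p - Lw))"

lemma service:
  assumes ea: "e (i - 1) \<le> a" and ao: "a \<le> off i" and dt: "\<Delta>t \<ge> 0"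
    and Tm: "T \<in> sets lebesgue" and Tsub: "T \<subseteq> {a..a+\<Delta>t}"
    and ST: "ST_set off L \<inter> {a..a+\<Delta>t} \<subseteq> T"
  shows "(\<Sum>j\<in>{i..i+int N-1}. G (\<Delta>t + p + e (i-1) - e j) (L j)) \<le> measure lebesgue T"
proof -
  define J where "J = {i..i+int N-1}"
  define b where "b = e (i-1) + \<Delta>t"
  define x where "x j = b + p - e j" for j
  define m where "m j = nat \<lfloor>x j / p\<rfloor>" for j
  define A where "A = (\<lambda>(j::int, n::nat). {off j + real n * p ..< min (e j + real n * p) b})"
  define S where "S = Sigma J (\<lambda>j. {..m j})"
  have xge: "x j \<ge> \<Delta>t" if "j \<in> J" for j
  proof -
    have "e j \<le> e (i - 1 + 1 * int N)" using that unfolding J_def by (intro e_mono) auto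
    also have "\<dots> = e (i-1) + p" using e_shift[of "i-1" 1] by simp
    finally show ?thesis unfolding x_def b_def by simp
  qed
  have fl: "of_int \<lfloor>x j / p\<rfloor> = real (m j)" if "j \<in> J" for j
  proof -
    have "x j / p \<ge> 0" using xge[OF that] dt p_pos by simp
    then show ?thesis unfolding m_def by simp
  qed
  have fl1: "real (m j) * p \<le> x j" "x j < real (m j) * p + p" if "j \<in> J" for j
  proof -
    have "of_int \<lfloor>x j / p\<rfloor> \<le> x j / p" "x j / p < of_int \<lfloor>x j / p\<rfloor> + 1"
      by linarith+
    then show "real (m j) * p \<le> x j" "x j < real (m j) * p + p"
      using fl[OF that] p_pos by (simp_all add: field_simps)
  qed
  have Asub: "A (j, n) \<subseteq> {off (j + int n * int N) ..< e (j + int n * int N)}" for j n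
    unfolding A_def using off_shift[of j "int n"] e_shift[of j "int n"] by auto
  have Aab: "A (j, n) \<subseteq> {a..a+\<Delta>t}" if "j \<in> J" for j n
  proof -
    have "off i \<le> off j" using that unfolding J_def by (intro off_mono) auto
    moreover have "0 \<le> real n * p" using p_pos by simp
    ultimately show ?thesis unfolding A_def b_def using ea ao by auto
  qed
  have AT: "(\<Union>s\<in>S. A s) \<subseteq> T"
  proof
    fix y assume "y \<in> (\<Union>s\<in>S. A s)"
    then obtain j n where jn: "j \<in> J" "y \<in> A (j, n)" unfolding S_def by auto
    have "y \<in> ST_set off L" using Asub jn(2) window_in_ST by blast
    moreover have "y \<in> {a..a+\<Delta>t}" using Aab[OF jn(1)] jn(2) by blast
    ultimately show "y \<in> T" using ST by blast
  qed
  have finS: "finite S" unfolding S_def J_def by auto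
  have disj: "disjoint_family_on A S"
    unfolding disjoint_family_on_def
  proof (intro ballI impI)
    fix s1 s2 assume s: "s1 \<in> S" "s2 \<in> S" "s1 \<noteq> s2"
    obtain j n where s1: "s1 = (j, n)" "j \<in> J" using s(1) unfolding S_def by auto
    obtain j' n' where s2: "s2 = (j', n')" "j' \<in> J" using s(2) unfolding S_def by auto
    have "j + int n * int N \<noteq> j' + int n' * int N"
      using idx_inj[of i j j' n n'] s1 s2 s(3) unfolding J_def by auto
    then have "{off (j + int n * int N) ..< e (j + int n * int N)} \<inter>
               {off (j' + int n' * int N) ..< e (j' + int n' * int N)} = {}"
      by (rule windows_disj)
    then show "A s1 \<inter> A s2 = {}" using Asub[of j n] Asub[of j' n'] s1 s2 by blast
  qed
  have Ameas: "A s \<in> lmeasurable" for s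
    unfolding A_def by (cases s) (simp add: Ico_lmeasurable)
  have "measure lebesgue (\<Union>s\<in>S. A s) = (\<Sum>s\<in>S. measure lebesgue (A s))"
  proof (rule measure_finite_Union[OF finS])
    show "A ` S \<subseteq> sets lebesgue" using Ameas by auto
    show "disjoint_family_on A S" by (rule disj)
    fix s show "emeasure lebesgue (A s) \<noteq> \<infinity>" using fmeasurableD2[OF Ameas[of s]] by simp
  qed
  also have "\<dots> = (\<Sum>j\<in>J. \<Sum>n\<in>{..m j}. measure lebesgue (A (j, n)))"
    unfolding S_def by (subst sum.Sigma) (auto simp: J_def)
  finally have eq: "measure lebesgue (\<Union>s\<in>S. A s) = (\<Sum>j\<in>J. \<Sum>n\<in>{..m j}. measure lebesgue (A (j, n)))" .
  have Tf: "T \<in> lmeasurable" by (rule fmeasurableI2[of "{a..a+\<Delta>t}"]) (use Tm Tsub in auto)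
  have Um: "(\<Union>s\<in>S. A s) \<in> sets lebesgue" using finS Ameas by auto
  have le: "measure lebesgue (\<Union>s\<in>S. A s) \<le> measure lebesgue T"
    by (rule measure_mono_fmeasurable[OF AT Um Tf])
  have perj: "G (\<Delta>t + p + e (i-1) - e j) (L j) \<le> (\<Sum>n\<in>{..m j}. measure lebesgue (A (j, n)))"
    if j: "j \<in> J" for j
  proof -
    have xx: "\<Delta>t + p + e (i-1) - e j = x j" unfolding x_def b_def by simp
    have full: "measure lebesgue (A (j, n)) = L j" if n: "n < m j" for n
    proof -
      have "real (Suc n) \<le> real (m j)" using n by simp
      then have "real (Suc n) * p \<le> real (m j) * p" using p_pos by (intro mult_right_mono) auto
      then have "e j + real n * p \<le> b" using fl1(1)[OF j] unfolding x_def by (simp add: algebra_simps)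
      then show ?thesis unfolding A_def using L_nn[of j] by (simp add: measure_Ico_max e_def)
    qed
    have last: "max 0 (x j - real (m j) * p - (p - L j)) \<le> measure lebesgue (A (j, m j))"
    proof -
      have "b < e j + real (m j) * p" using fl1(2)[OF j] unfolding x_def by simp
      then show ?thesis unfolding A_def x_def by (simp add: measure_Ico_max e_def)
    qed
    have "(\<Sum>n\<in>{..m j}. measure lebesgue (A (j, n))) =
          (\<Sum>n\<in>{..<m j}. measure lebesgue (A (j, n))) + measure lebesgue (A (j, m j))"
      by (simp add: lessThan_Suc_atMost[symmetric])
    also have "(\<Sum>n\<in>{..<m j}. measure lebesgue (A (j, n))) = real (m j) * L j"
      using full by simp
    finally show ?thesis using last unfolding xx G_def fl[OF j] by simp
  qed
  have "(\<Sum>j\<in>J. G (\<Delta>t + p + e (i-1) - e j) (L j)) \<le> (\<Sum>j\<in>J. \<Sum>n\<in>{..m j}. measure lebesgue (A (j, n)))"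
    by (rule sum_mono) (rule perj)
  then show ?thesis using eq le unfolding J_def by linarith
qed


lemma tdma_le_G:
  assumes C: "C > 0" and L0: "0 \<le> Lw" and Lp: "Lw \<le> p"
  shows "beta_TDMA C p x Lw \<le> C * G x Lw"
proof -
  define f where "f = \<lfloor>x / p\<rfloor>"
  define c where "c = \<lceil>x / p\<rceil>"
  have f1: "of_int f \<le> x / p" "x / p < of_int f + 1" unfolding f_def by linarith+
  have c1: "x / p \<le> of_int c" "of_int c < x / p + 1" unfolding c_def by linarith+
  have cf: "c = f \<or> c = f + 1" using f1 c1 by linarith
  have "x - of_int c * (p - Lw) \<le> G x Lw"
  proof (cases "c = f")
    case True
    then have "x / p = of_int f" using f1 c1 by linarith
    then have "x = of_int f * p" using p_pos by (simp add: field_simps)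
    then show ?thesis unfolding G_def f_def[symmetric] using True by (simp add: algebra_simps)
  next
    case False
    then have "c = f + 1" using cf by simp
    then show ?thesis unfolding G_def f_def[symmetric] by (simp add: algebra_simps)
  qed
  moreover have "of_int f * Lw \<le> G x Lw" unfolding G_def f_def by simp
  ultimately have "max (of_int f * Lw) (x - of_int c * (p - Lw)) \<le> G x Lw" by simp
  then show ?thesis unfolding beta_TDMA_def f_def c_def using C by simp
qed

lemma tdma_nonneg:
  assumes C: "C > 0" and L0: "0 \<le> Lw" and x0: "0 \<le> x"
  shows "0 \<le> beta_TDMA C p x Lw"
proof -
  have "0 \<le> \<lfloor>x / p\<rfloor>" using x0 p_pos by simp
  then have "0 \<le> of_int \<lfloor>x / p\<rfloor> * Lw" using L0 by simp
  then show ?thesis unfolding beta_TDMA_def using C by simp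
qed

lemma h_eq:
  "(\<Sum>j = i..i + int N - 1. beta_TDMA C p (t + p - L j - gap off L i - (off j - off i)) (L j))
   = (\<Sum>j = i..i + int N - 1. beta_TDMA C p (t + p + e (i - 1) - e j) (L j))"
  by (rule sum.cong) (auto simp: gap_def e_def algebra_simps)

lemma h_shift:
  "(\<Sum>j = i..i + int N - 1. beta_TDMA C p (t + p + e (i - 1) - e j) (L j))
   = (\<Sum>j = i + q * int N..i + q * int N + int N - 1.
        beta_TDMA C p (t + p + e (i + q * int N - 1) - e j) (L j))"
proof (rule sum.reindex_bij_witness[of _ "\<lambda>j. j - q * int N" "\<lambda>j. j + q * int N"])
  fix a
  have "e (i + q * int N - 1) = e (i - 1) + of_int q * p" using e_shift[of "i - 1" q] by (simp add: algebra_simps)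
  moreover have "e (a + q * int N) = e a + of_int q * p" by (rule e_shift)
  ultimately show "beta_TDMA C p (t + p + e (i + q * int N - 1) - e (a + q * int N)) (L (a + q * int N))
      = beta_TDMA C p (t + p + e (i - 1) - e a) (L a)" using L_shift[of a q] by (simp add: algebra_simps)
qed auto

lemma betaST_le:
  "beta_ST C p N off L t \<le> (\<Sum>j = i..i + int N - 1. beta_TDMA C p (t + p + e (i - 1) - e j) (L j))"
proof -
  define i0 where "i0 = i mod int N"
  define q where "q = i div int N"
  have i: "i = i0 + q * int N" unfolding i0_def q_def by simp
  have i0r: "i0 \<in> {0..int N - 1}" unfolding i0_def using N_pos by auto
  have "beta_ST C p N off L t \<le> (\<Sum>j = i0..i0 + int N - 1. beta_TDMA C p (t + p - L j - gap off L i0 - (off j - off i0)) (L j))"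
    unfolding beta_ST_def by (rule Min_le) (use i0r in auto)
  also have "\<dots> = (\<Sum>j = i..i + int N - 1. beta_TDMA C p (t + p + e (i - 1) - e j) (L j))"
    unfolding h_eq h_shift[of C t i0 q] i[symmetric] ..
  finally show ?thesis .
qed

lemma x_ge: "i \<le> j \<Longrightarrow> j \<le> i + int N - 1 \<Longrightarrow> e j \<le> e (i - 1) + p"
  using e_mono[of j "i - 1 + 1 * int N"] e_shift[of "i-1" 1] by simp

lemma betaST_nonneg:
  assumes C: "C > 0" and t: "t \<ge> 0"
  shows "0 \<le> beta_ST C p N off L t"
proof -
  let ?h = "\<lambda>i. \<Sum>j = i..i + int N - 1. beta_TDMA C p (t + p - L j - gap off L i - (off j - off i)) (L j)"
  have "beta_ST C p N off L t \<in> ?h ` {0..int N - 1}"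
    unfolding beta_ST_def by (rule Min_in) (use N_pos in auto)
  then obtain i where "beta_ST C p N off L t = ?h i" by auto
  also have "\<dots> = (\<Sum>j = i..i + int N - 1. beta_TDMA C p (t + p + e (i - 1) - e j) (L j))"
    by (rule h_eq)
  also have "\<dots> \<ge> 0"
    by (rule sum_nonneg, rule tdma_nonneg[OF C L_nn]) (use x_ge t in force)
  finally show ?thesis .
qed

lemma crossing_gen:
  fixes f :: "int \<Rightarrow> real"
  assumes "f a \<le> s" "s < f b" "a < b"
  shows "\<exists>k. f (k - 1) \<le> s \<and> s < f k"
proof -
  define K where "K = {k. a < k \<and> k \<le> b \<and> s < f k}"
  have fin: "finite K" unfolding K_def by (rule finite_subset[of _ "{a..b}"]) auto
  have ne: "b \<in> K" unfolding K_def using assms by auto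
  define k where "k = Min K"
  have kK: "k \<in> K" unfolding k_def using fin ne by (intro Min_in) auto
  have "f (k - 1) \<le> s"
  proof (cases "k - 1 = a")
    case True then show ?thesis using assms by simp
  next
    case False
    have "k - 1 \<notin> K"
    proof
      assume "k - 1 \<in> K"
      then have "k \<le> k - 1" unfolding k_def using fin by (intro Min_le)
      then show False by simp
    qed
    then show ?thesis using kK False unfolding K_def by auto
  qed
  then show ?thesis using kK unfolding K_def by auto
qed

lemma crossing: "\<exists>k. e (k - 1) \<le> s \<and> s < e k"
proof -
  define qa where "qa = \<lfloor>(s - e 0) / p\<rfloor> - 1"
  define qb where "qb = \<lceil>(s - e 0) / p\<rceil> + 1"
  have "of_int qa \<le> (s - e 0) / p" unfolding qa_def by linarith
  then have "of_int qa * p \<le> s - e 0" using p_pos by (simp add: field_simps)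
  then have a: "e (0 + qa * int N) \<le> s" using e_shift[of 0 qa] by simp
  have "(s - e 0) / p < of_int qb" unfolding qb_def by linarith
  then have "s - e 0 < of_int qb * p" using p_pos by (simp add: field_simps)
  then have b: "s < e (0 + qb * int N)" using e_shift[of 0 qb] by simp
  have "qa < qb" unfolding qa_def qb_def by linarith
  then have "qa * int N < qb * int N" using N_pos by simp
  then show ?thesis using crossing_gen[of e "0 + qa * int N" s "0 + qb * int N"] a b by simp
qed

end



theorem theorem5:
  fixes C p idSl cmin cmax :: real
    and N :: nat
    and off L :: "int \<Rightarrow> real"
    and R c :: "real \<Rightarrow> real"
    and s \<Delta>t :: real
  assumes C_pos: "C > 0" and p_pos: "p > 0" and N_pos: "N \<ge> 1"
    and o0: "0 \<le> off 0"
    and o_mono: "\<And>k. 0 \<le> k \<Longrightarrow> k < int N - 1 \<Longrightarrow> off k < off (k + 1)"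
    and o_last: "off (int N - 1) < p"
    and L_nonneg: "\<And>k. 0 \<le> k \<Longrightarrow> k \<le> int N - 1 \<Longrightarrow> L k \<ge> 0"
    and no_overlap: "\<And>k. 0 \<le> k \<Longrightarrow> k < int N - 1 \<Longrightarrow> off k + L k \<le> off (k + 1)"
    and no_overlap_last: "off (int N - 1) + L (int N - 1) \<le> off 0 + p"
    and o_per: "\<And>k. off (k + int N) = off k + p"
    and L_per: "\<And>k. L (k + int N) = L k"
    and idSl: "0 < idSl" "idSl < C"
    and partition: "\<And>s' d. d \<ge> 0 \<Longrightarrow>
       \<exists>Tp Tm T0.
          Tp \<in> sets lebesgue \<and> Tm \<in> sets lebesgue \<and> T0 \<in> sets lebesgue \<and>
          Tp \<union> Tm \<union> T0 = {s'..s'+d} \<and>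
          Tp \<inter> Tm = {} \<and> Tp \<inter> T0 = {} \<and> Tm \<inter> T0 = {} \<and>
          ST_set off L \<inter> {s'..s'+d} \<subseteq> T0 \<and>
          (\<forall>u v. s' \<le> u \<longrightarrow> u \<le> v \<longrightarrow> v \<le> s' + d \<longrightarrow>
              R v - R u = C * measure lebesgue (Tm \<inter> {u..v}) \<and>
              c v - c u \<le> idSl * measure lebesgue (Tp \<inter> {u..v})
                         + (idSl - C) * measure lebesgue (Tm \<inter> {u..v}))"
    and c_bounds: "\<And>t. cmin \<le> c t \<and> c t \<le> cmax"
    and cmin_le: "cmin \<le> cmax"
    and dt: "\<Delta>t \<ge> 0"
  shows "R (s + \<Delta>t) - R s
           \<le> up_plus (\<lambda>u. u - beta_ST C p N off L u / C) \<Delta>t * idSl + cmax - cmin"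
proof -
  interpret g: gcl p N off L
    by (rule gcl.intro) (fact p_pos N_pos o0 o_mono o_last L_nonneg no_overlap no_overlap_last o_per L_per)+
  define B where "B = up_plus (\<lambda>u. u - beta_ST C p N off L u / C) \<Delta>t * idSl + cmax - cmin"
  have Rmono: "R u \<le> R v" if h: "s' \<le> u" "u \<le> v" "v \<le> s' + d" "d \<ge> 0" for s' d u v
  proof -
    obtain Tm :: "real set" where "\<forall>u v. s' \<le> u \<longrightarrow> u \<le> v \<longrightarrow> v \<le> s' + d \<longrightarrow>
              R v - R u = C * measure lebesgue (Tm \<inter> {u..v})"
      using partition[OF h(4), of s'] by blast
    then have "R v - R u = C * measure lebesgue (Tm \<inter> {u..v})" using h by blast
    moreover have "0 \<le> C * measure lebesgue (Tm \<inter> {u..v})" using C_pos by simp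
    ultimately show ?thesis by linarith
  qed
  have bdd: "up_plus (\<lambda>u. u - beta_ST C p N off L u / C) \<Delta>t \<ge> \<Delta>t - beta_ST C p N off L \<Delta>t / C"
  proof -
    have "bdd_above ((\<lambda>u. u - beta_ST C p N off L u / C) ` {0..\<Delta>t})"
    proof (rule bdd_aboveI2)
      fix u :: real assume u: "u \<in> {0..\<Delta>t}"
      have "0 \<le> beta_ST C p N off L u" using g.betaST_nonneg[OF C_pos] u by simp
      then have "0 \<le> beta_ST C p N off L u / C" using C_pos by simp
      then show "u - beta_ST C p N off L u / C \<le> \<Delta>t" using u by simp
    qed
    then have "\<Delta>t - beta_ST C p N off L \<Delta>t / C \<le> (SUP u\<in>{0..\<Delta>t}. u - beta_ST C p N off L u / C)"
      by (rule cSUP_upper[rotated]) (use dt in simp)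
    then show ?thesis unfolding up_plus_def by simp
  qed
  have Bge: "idSl * (\<Delta>t - beta_ST C p N off L \<Delta>t / C) + cmax - cmin \<le> B"
    unfolding B_def using bdd idSl(1) by (simp add: mult_left_mono mult.commute)
  have key: "R (a + \<Delta>t) - R a \<le> B" if ea: "g.e (i - 1) \<le> a" and ao: "a \<le> off i" for a i
  proof -
    obtain Tp Tm T0 where P:
          "Tp \<in> sets lebesgue" "Tm \<in> sets lebesgue" "T0 \<in> sets lebesgue"
          "Tp \<union> Tm \<union> T0 = {a..a+\<Delta>t}"
          "Tp \<inter> Tm = {}" "Tp \<inter> T0 = {}" "Tm \<inter> T0 = {}"
          "ST_set off L \<inter> {a..a+\<Delta>t} \<subseteq> T0"
          "\<forall>u v. a \<le> u \<longrightarrow> u \<le> v \<longrightarrow> v \<le> a + \<Delta>t \<longrightarrow>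
              R v - R u = C * measure lebesgue (Tm \<inter> {u..v}) \<and>
              c v - c u \<le> idSl * measure lebesgue (Tp \<inter> {u..v})
                         + (idSl - C) * measure lebesgue (Tm \<inter> {u..v})"
      using partition[OF dt, of a] by blast
    have sub: "Tp \<subseteq> {a..a+\<Delta>t}" "Tm \<subseteq> {a..a+\<Delta>t}" "T0 \<subseteq> {a..a+\<Delta>t}" using P(4) by auto
    have fm: "Tp \<in> lmeasurable" "Tm \<in> lmeasurable" "T0 \<in> lmeasurable"
      using sub P(1-3) by (auto intro: fmeasurableI2[of "{a..a+\<Delta>t}"])
    have eqs: "Tp \<inter> {a..a+\<Delta>t} = Tp" "Tm \<inter> {a..a+\<Delta>t} = Tm" using sub by auto
    have RR: "R (a+\<Delta>t) - R a = C * measure lebesgue Tm"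
      and cc: "c (a+\<Delta>t) - c a \<le> idSl * measure lebesgue Tp + (idSl - C) * measure lebesgue Tm"
      using P(9)[rule_format, of a "a+\<Delta>t"] dt eqs by auto
    have U: "Tp \<union> Tm \<in> lmeasurable" using fm by (intro fmeasurable.Un)
    have "measure lebesgue (Tp \<union> Tm \<union> T0) = measure lebesgue (Tp \<union> Tm) + measure lebesgue T0"
      by (rule measure_Union) (use fmeasurableD2[OF U] fmeasurableD2[OF fm(3)] fmeasurableD[OF U] P(3,6,7) in auto)
    moreover have "measure lebesgue (Tp \<union> Tm) = measure lebesgue Tp + measure lebesgue Tm"
      by (rule measure_Union) (use fmeasurableD2[OF fm(1)] fmeasurableD2[OF fm(2)] P(1,2,5) in auto)
    ultimately have tot: "measure lebesgue Tp + measure lebesgue Tm + measure lebesgue T0 = \<Delta>t"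
      using P(4) dt by simp
    have "(\<Sum>j\<in>{i..i+int N-1}. g.G (\<Delta>t + p + g.e (i-1) - g.e j) (L j)) \<le> measure lebesgue T0"
      by (rule g.service[OF ea ao dt P(3) sub(3) P(8)])
    moreover have "beta_ST C p N off L \<Delta>t \<le> (\<Sum>j\<in>{i..i+int N-1}. C * g.G (\<Delta>t + p + g.e (i-1) - g.e j) (L j))"
    proof -
      have "(\<Sum>j\<in>{i..i+int N-1}. beta_TDMA C p (\<Delta>t + p + g.e (i-1) - g.e j) (L j))
            \<le> (\<Sum>j\<in>{i..i+int N-1}. C * g.G (\<Delta>t + p + g.e (i-1) - g.e j) (L j))"
        by (rule sum_mono, rule g.tdma_le_G[OF C_pos g.L_nn g.L_le_p])
      then show ?thesis using g.betaST_le[of C \<Delta>t i] by linarith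
    qed
    ultimately have "beta_ST C p N off L \<Delta>t \<le> C * measure lebesgue T0"
      unfolding sum_distrib_left[symmetric]
      by (meson order_trans mult_left_mono less_imp_le[OF C_pos])
    then have T0ge: "beta_ST C p N off L \<Delta>t / C \<le> measure lebesgue T0"
      using C_pos by (simp add: divide_le_eq mult.commute)
    have cb: "c (a+\<Delta>t) - c a \<ge> cmin - cmax" using c_bounds[of a] c_bounds[of "a+\<Delta>t"] by simp
    have "C * measure lebesgue Tm \<le> idSl * (measure lebesgue Tp + measure lebesgue Tm) + cmax - cmin"
      using cc cb by (simp add: algebra_simps)
    also have "\<dots> \<le> idSl * (\<Delta>t - beta_ST C p N off L \<Delta>t / C) + cmax - cmin"
      using tot T0ge idSl(1) by (simp add: mult_left_mono)
    finally show ?thesis using RR Bge by linarith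
  qed
  obtain k where k: "g.e (k - 1) \<le> s" "s < g.e k" using g.crossing by blast
  show ?thesis
  proof (cases "s \<le> off k")
    case True
    show ?thesis using key[OF k(1) True] unfolding B_def by simp
  next
    case False
    define d where "d = g.e k + \<Delta>t - s"
    have d0: "d \<ge> 0" unfolding d_def using k dt by simp
    have k1: "g.e (k + 1 - 1) \<le> g.e k" "g.e k \<le> off (k + 1)" using g.e_le_off[of k "k+1"] by auto
    have K: "R (g.e k + \<Delta>t) - R (g.e k) \<le> B" using key[OF k1] .
    obtain Tm T0 :: "real set" where P:
          "Tm \<in> sets lebesgue"
          "Tm \<inter> T0 = {}"
          "ST_set off L \<inter> {s..s+d} \<subseteq> T0"
          "\<forall>u v. s \<le> u \<longrightarrow> u \<le> v \<longrightarrow> v \<le> s + d \<longrightarrow>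
              R v - R u = C * measure lebesgue (Tm \<inter> {u..v})"
      using partition[OF d0, of s] by blast
    have "Tm \<inter> {s..g.e k} \<subseteq> {g.e k}"
    proof
      fix y assume y: "y \<in> Tm \<inter> {s..g.e k}"
      show "y \<in> {g.e k}"
      proof (rule ccontr)
        assume "y \<notin> {g.e k}"
        then have "y \<in> {off k..<g.e k}" using y False by auto
        then have "y \<in> ST_set off L" by (rule g.window_in_ST)
        moreover have "y \<in> {s..s+d}" using y dt unfolding d_def by auto
        ultimately show False using P(2,3) y by blast
      qed
    qed
    then have "measure lebesgue (Tm \<inter> {s..g.e k}) \<le> measure lebesgue {g.e k}"
      by (intro measure_mono_fmeasurable) (use P(1) lmeasurable_interval(1)[of "g.e k" "g.e k"] in auto)
    then have m0: "measure lebesgue (Tm \<inter> {s..g.e k}) = 0" by (simp add: measure_le_0_iff)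
    have Rs: "R (g.e k) = R s" using P(4)[rule_format, of s "g.e k"] k m0 d0 dt unfolding d_def by auto
    have "R (s + \<Delta>t) \<le> R (g.e k + \<Delta>t)"
      by (rule Rmono[of s _ _ d]) (use k dt d0 in \<open>auto simp: d_def\<close>)
    then show ?thesis using K Rs unfolding B_def by linarith
  qed
qed


end
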